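(* Let $n\geq 2$ and let $0<k_1<k_2<\cdots<k_r<n$ be integers; put $k_0=0$. Let $$\mathcal{W}^{\Theta}=\{w\in S_n:\ w(1)<\cdots<w(k_1),\ w(k_1+1)<\cdots<w(k_2),\ \dots,\ w(k_r+1)<\cdots<w(n)\}.$$ For $w\in\mathcal{W}^{\Theta}$ with code $\alpha=(\alpha_1,\dots,\alpha_{n-1})$, and for each $j\in\{1,\dots,r\}$, the sequence $\lambda^j(w)=(\alpha_{k_j},\alpha_{k_j-1},\dots,\alpha_{k_{j-1}+1})$ is a partition whose Ferrers diagram fits in a $(k_j-k_{j-1})\times(n-k_j)$ rectangle (at most $k_j-k_{j-1}$ parts, each at most $n-k_j$), and the map $w\mapsto(\lambda^1(w),\dots,\lambda^r(w))$ is a bijection from $\mathcal{W}^{\Theta}$ onto $\prod_{j=1}^{r}\mathcal{P}_j$, where $\mathcal{P}_j$ is the set of partitions whose Ferrers diagram fits in a $(k_j-k_{j-1})\times(n-k_j)$ rectangle.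
   Context: Permutations $w\in S_n$ are written in one-line notation $w=w(1)\cdots w(n)$. The code of $w$ is $\alpha=(\alpha_1,\dots,\alpha_{n-1})$ with $\alpha_i=\#\{k>i:\ w(k)<w(i)\}$. A partition is a weakly decreasing finite sequence of nonnegative integers (zeros allowed/ignored). *)

theory Defs
  imports "HOL-Combinatorics.Permutations"
begin

definition code_entry :: "nat \<Rightarrow> (nat \<Rightarrow> nat) \<Rightarrow> nat \<Rightarrow> nat" where
  "code_entry n w i = card {k. i < k \<and> k \<le> n \<and> w k < w i}"

text \<open>End of block j (0 <= j <= r): block j is positions k j + 1 .. block_end.\<close>
definition block_end :: "nat \<Rightarrow> (nat \<Rightarrow> nat) \<Rightarrow> nat \<Rightarrow> nat \<Rightarrow> nat" where
  "block_end n k r j = (if j < r then k (Suc j) else n)"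

definition W_Theta :: "nat \<Rightarrow> (nat \<Rightarrow> nat) \<Rightarrow> nat \<Rightarrow> (nat \<Rightarrow> nat) set" where
  "W_Theta n k r = {w. w permutes {1..n} \<and>
     (\<forall>j\<le>r. \<forall>i. k j < i \<and> i < block_end n k r j \<longrightarrow> w i < w (Suc i))}"

definition lambda_part :: "nat \<Rightarrow> (nat \<Rightarrow> nat) \<Rightarrow> (nat \<Rightarrow> nat) \<Rightarrow> nat \<Rightarrow> nat list" where
  "lambda_part n k w j = map (\<lambda>t. code_entry n w (k j - t)) [0..<k j - k (j - 1)]"

text \<open>Partitions fitting in an a x b rectangle, represented as weakly decreasing
  lists of length exactly a (padded with zeros) with all entries <= b.\<close>
definition fits_rect :: "nat \<Rightarrow> nat \<Rightarrow> nat list \<Rightarrow> bool" where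
  "fits_rect a b xs \<longleftrightarrow> length xs = a \<and> sorted_wrt (\<ge>) xs \<and> (\<forall>x\<in>set xs. x \<le> b)"

definition rect_partitions :: "nat \<Rightarrow> nat \<Rightarrow> nat list set" where
  "rect_partitions a b = {xs. fits_rect a b xs}"

text \<open>The product P_1 x ... x P_r, as lists of length r whose (j-1)-th entry lies in P_j.\<close>
definition partition_product :: "nat \<Rightarrow> (nat \<Rightarrow> nat) \<Rightarrow> nat \<Rightarrow> nat list list set" where
  "partition_product n k r = {Ls. length Ls = r \<and>
     (\<forall>j<r. Ls ! j \<in> rect_partitions (k (Suc j) - k j) (n - k (Suc j)))}"

definition lambda_map :: "nat \<Rightarrow> (nat \<Rightarrow> nat) \<Rightarrow> nat \<Rightarrow> (nat \<Rightarrow> nat) \<Rightarrow> nat list list" where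
  "lambda_map n k r w = map (lambda_part n k w) [1..<Suc r]"

end

theory Submission
  imports Defs
begin

lemma card_below_nth:
  assumes "finite V" "a < card V"
  shows "sorted_list_of_set V ! a \<in> V \<and> card {x\<in>V. x < sorted_list_of_set V ! a} = (a::nat)"
proof -
  define xs where "xs = sorted_list_of_set V"
  have d: "distinct xs" and s: "sorted xs" and st: "set xs = V" and l: "length xs = card V"
    using assms by (auto simp: xs_def)
  have ss: "sorted_wrt (<) xs" using d s by (simp add: strict_sorted_iff)
  have "{x\<in>V. x < xs ! a} = set (take a xs)"
  proof safe
    fix x assume "x \<in> V" "x < xs ! a"
    then obtain b where b: "b < length xs" "x = xs ! b" using st by (auto simp: in_set_conv_nth)
    have "b < a"
    proof (rule ccontr)
      assume "\<not> b < a" then have "xs ! a \<le> xs ! b" using s b assms l by (simp add: sorted_nth_mono)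
      then show False using b \<open>x < xs ! a\<close> by simp
    qed
    then show "x \<in> set (take a xs)" using b by (auto simp: in_set_conv_nth intro!: exI[of _ b])
  next
    fix x assume "x \<in> set (take a xs)" then show "x \<in> V" using st by (meson in_set_takeD)
  next
    fix x assume "x \<in> set (take a xs)"
    then obtain b where b: "b < a" "x = xs ! b" using assms l by (auto simp: in_set_conv_nth)
    then show "x < xs ! a" using ss assms l by (simp add: sorted_wrt_nth_less)
  qed
  moreover have "card (set (take a xs)) = a" using d assms l by (simp add: distinct_card)
  moreover have "xs ! a \<in> V" using st l assms by auto
  ultimately show ?thesis by (simp add: xs_def)
qed

lemma card_below_inj:
  assumes "finite V" "x \<in> V" "y \<in> V" "card {z\<in>V. z < x} = card {z\<in>V. z < (y::nat)}"
  shows "x = y"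
proof (rule ccontr)
  assume "x \<noteq> y"
  then consider "x < y" | "y < x" by linarith
  then show False
  proof cases
    case 1
    have "card {z\<in>V. z < x} < card {z\<in>V. z < y}"
      by (rule psubset_card_mono) (use 1 assms in auto)
    then show False using assms by auto
  next
    case 2
    have "card {z\<in>V. z < y} < card {z\<in>V. z < x}"
      by (rule psubset_card_mono) (use 2 assms in auto)
    then show False using assms by auto
  qed
qed

lemma bij_card_filter:
  assumes "bij_betw f A B"
  shows "card {x\<in>A. P (f x)} = card {y\<in>B. P y}"
proof -
  have im: "f ` {x\<in>A. P (f x)} = {y\<in>B. P y}" using assms by (auto simp: bij_betw_def)
  have "inj_on f {x\<in>A. P (f x)}" using assms by (auto simp: bij_betw_def inj_on_def)
  then have "card (f ` {x\<in>A. P (f x)}) = card {x\<in>A. P (f x)}" by (rule card_image)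
  then show ?thesis using im by simp
qed

lemma lehmer_exists:
  fixes \<alpha> :: "nat \<Rightarrow> nat" and V :: "nat set"
  shows "n - m = d \<Longrightarrow> finite V \<Longrightarrow> card V = n - m \<Longrightarrow> m \<le> n \<Longrightarrow>
    (\<forall>i. m < i \<and> i \<le> n \<longrightarrow> \<alpha> i \<le> n - i) \<Longrightarrow>
    \<exists>w. bij_betw w {m<..n} V \<and> (\<forall>i. m < i \<and> i \<le> n \<longrightarrow> card {k. i < k \<and> k \<le> n \<and> w k < w i} = \<alpha> i)"
proof (induction d arbitrary: m V)
  case 0
  then have "V = {}" "{m<..n} = {}" by auto
  then show ?case by (auto simp: bij_betw_def)
next
  case (Suc d)
  define a where "a = \<alpha> (Suc m)"
  have "a \<le> n - Suc m" using Suc.prems unfolding a_def by auto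
  then have "a < card V" using Suc.prems by auto
  define v where "v = sorted_list_of_set V ! a"
  have vV: "v \<in> V" and cv: "card {x\<in>V. x < v} = a" using card_below_nth[OF Suc.prems(2) \<open>a < card V\<close>]
    by (auto simp: v_def)
  have "\<exists>w. bij_betw w {Suc m<..n} (V - {v}) \<and> (\<forall>i. Suc m < i \<and> i \<le> n \<longrightarrow> card {k. i < k \<and> k \<le> n \<and> w k < w i} = \<alpha> i)"
    apply (rule Suc.IH) using Suc.prems vV by auto
  then obtain w' where bw: "bij_betw w' {Suc m<..n} (V - {v})"
    and cw: "\<forall>i. Suc m < i \<and> i \<le> n \<longrightarrow> card {k. i < k \<and> k \<le> n \<and> w' k < w' i} = \<alpha> i" by blast
  define w where "w = w'(Suc m := v)"
  have ins: "{m<..n} = insert (Suc m) {Suc m<..n}" using Suc.prems by auto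
  have "bij_betw w {Suc m<..n} (V - {v}) = bij_betw w' {Suc m<..n} (V - {v})"
    by (rule bij_betw_cong) (auto simp: w_def)
  then have bw2: "bij_betw w {Suc m<..n} (V - {v})" using bw by simp
  have wv: "w (Suc m) = v" by (simp add: w_def)
  have "inj_on w (insert (Suc m) {Suc m<..n})"
    using bw2 wv by (auto simp: bij_betw_def)
  moreover have "w ` (insert (Suc m) {Suc m<..n}) = V"
    using bw2 wv vV by (auto simp: bij_betw_def)
  ultimately have "bij_betw w {m<..n} V" unfolding ins bij_betw_def by simp
  moreover have "card {k. i < k \<and> k \<le> n \<and> w k < w i} = \<alpha> i" if "m < i" "i \<le> n" for i
  proof (cases "i = Suc m")
    case True
    have "{k. i < k \<and> k \<le> n \<and> w k < w i} = {x\<in>{Suc m<..n}. w' x < v}"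
      using True by (auto simp: w_def)
    then have "card {k. i < k \<and> k \<le> n \<and> w k < w i} = card {y\<in>V - {v}. y < v}"
      using bij_card_filter[OF bw, of "\<lambda>y. y < v"] by simp
    also have "{y\<in>V - {v}. y < v} = {x\<in>V. x < v}" by auto
    finally show ?thesis using cv True a_def by simp
  next
    case False
    then have "{k. i < k \<and> k \<le> n \<and> w k < w i} = {k. i < k \<and> k \<le> n \<and> w' k < w' i}"
      using that by (auto simp: w_def)
    then show ?thesis using cw that False by simp
  qed
  ultimately show ?case by blast
qed

lemma lehmer_unique:
  fixes n m d :: nat
  shows "n - m = d \<Longrightarrow> bij_betw w {m<..n} V \<Longrightarrow> bij_betw v {m<..n} (V::nat set) \<Longrightarrow> finite V \<Longrightarrow>
    (\<forall>i. m < i \<and> i \<le> n \<longrightarrow> card {k. i < k \<and> k \<le> n \<and> w k < w i} = card {k. i < k \<and> k \<le> n \<and> v k < v i}) \<Longrightarrow>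
    \<forall>i. m < i \<and> i \<le> n \<longrightarrow> w i = v i"
proof (induction d arbitrary: m V)
  case 0
  then show ?case by auto
next
  case (Suc d)
  have mn: "Suc m \<in> {m<..n}" using Suc.prems by auto
  have eqs: "{Suc m<..n} = {m<..n} - {Suc m}" by auto
  have bw: "bij_betw w {Suc m<..n} (V - {w (Suc m)})"
    unfolding eqs by (rule bij_betw_DiffI[OF Suc.prems(2)]) (use mn Suc.prems(2) in \<open>auto simp: bij_betw_def\<close>)
  have bv: "bij_betw v {Suc m<..n} (V - {v (Suc m)})"
    unfolding eqs by (rule bij_betw_DiffI[OF Suc.prems(3)]) (use mn Suc.prems(3) in \<open>auto simp: bij_betw_def\<close>)
  have e1: "{k. Suc m < k \<and> k \<le> n \<and> w k < w (Suc m)} = {x\<in>{Suc m<..n}. w x < w (Suc m)}" by auto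
  have e2: "{k. Suc m < k \<and> k \<le> n \<and> v k < v (Suc m)} = {x\<in>{Suc m<..n}. v x < v (Suc m)}" by auto
  have pc: "card {k. Suc m < k \<and> k \<le> n \<and> w k < w (Suc m)} = card {k. Suc m < k \<and> k \<le> n \<and> v k < v (Suc m)}"
    using Suc.prems(5) mn by simp
  have c0: "card {y\<in>V - {w (Suc m)}. y < w (Suc m)} = card {y\<in>V - {v (Suc m)}. y < v (Suc m)}"
    using bij_card_filter[OF bw, of "\<lambda>y. y < w (Suc m)"] bij_card_filter[OF bv, of "\<lambda>y. y < v (Suc m)"]
      pc unfolding e1 e2 by simp
  have s1: "{y\<in>V - {w (Suc m)}. y < w (Suc m)} = {y\<in>V. y < w (Suc m)}" by auto
  have s2: "{y\<in>V - {v (Suc m)}. y < v (Suc m)} = {y\<in>V. y < v (Suc m)}" by auto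
  have wV: "w (Suc m) \<in> V" and vV: "v (Suc m) \<in> V" using mn Suc.prems(2,3) by (auto simp: bij_betw_def)
  have c: "card {y\<in>V. y < w (Suc m)} = card {y\<in>V. y < v (Suc m)}" using c0 unfolding s1 s2 .
  have eq: "w (Suc m) = v (Suc m)" by (rule card_below_inj[OF Suc.prems(4) wV vV c])
  have pr5: "\<forall>i. Suc m < i \<and> i \<le> n \<longrightarrow> card {k. i < k \<and> k \<le> n \<and> w k < w i} = card {k. i < k \<and> k \<le> n \<and> v k < v i}"
    using Suc.prems(5) by simp
  have fin: "finite (V - {w (Suc m)})" using Suc.prems(4) by simp
  have nd: "n - Suc m = d" using Suc.prems(1) by simp
  have bv': "bij_betw v {Suc m<..n} (V - {w (Suc m)})" using bv eq by simp
  have R: "\<forall>i. Suc m < i \<and> i \<le> n \<longrightarrow> w i = v i"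
    by (rule Suc.IH[OF nd bw bv' fin pr5])
  show ?case
  proof (intro allI impI)
    fix i assume i: "m < i \<and> i \<le> n"
    show "w i = v i"
    proof (cases "i = Suc m")
      case True then show ?thesis using eq by simp
    next
      case False then show ?thesis using R i by simp
    qed
  qed
qed


lemma k_mono_strict:
  assumes "\<forall>j<r. k j < k (Suc j)" "a < b" "b \<le> r"
  shows "k a < (k b :: nat)"
  using assms(2,3)
proof (induction b)
  case 0 then show ?case by simp
next
  case (Suc b)
  have kb: "k b < k (Suc b)" using assms(1) Suc.prems(2) by simp
  show ?case
  proof (cases "a = b")
    case True then show ?thesis using kb by simp
  next
    case False
    then have "a < b" using Suc.prems(1) by simp
    then have "k a < k b" using Suc.IH Suc.prems(2) by simp
    then show ?thesis using kb by simp
  qed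
qed

lemma k_mono:
  assumes "\<forall>j<r. k j < k (Suc j)" "a \<le> b" "b \<le> r"
  shows "k a \<le> (k b :: nat)"
proof (cases "a = b")
  case False
  then have "a < b" using assms(2) by simp
  then show ?thesis using k_mono_strict[OF assms(1) _ assms(3)] by (simp add: less_imp_le)
qed simp

lemma cover:
  assumes "\<forall>j<r. k j < k (Suc j)" "k 0 = (0::nat)" "0 < i" "i \<le> k r"
  shows "\<exists>j\<in>{1..r}. k (j - 1) < i \<and> i \<le> k j"
  using assms
proof (induction r)
  case 0 then show ?case by simp
next
  case (Suc r)
  show ?case
  proof (cases "i \<le> k r")
    case True
    have "\<forall>j<r. k j < k (Suc j)" using Suc.prems(1) by simp
    then have "\<exists>j\<in>{1..r}. k (j - 1) < i \<and> i \<le> k j" using Suc.IH Suc.prems(2,3) True by blast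
    then show ?thesis by auto
  next
    case False
    then show ?thesis using Suc.prems(1,4) by (intro bexI[of _ "Suc r"]) auto
  qed
qed

lemma cover_unique:
  assumes "\<forall>j<r. k j < k (Suc j)"
    "j \<in> {1..r}" "k (j - 1) < i" "i \<le> (k j::nat)"
    "j' \<in> {1..r}" "k (j' - 1) < i" "i \<le> k j'"
  shows "j = j'"
proof (rule ccontr)
  assume "j \<noteq> j'"
  then consider "j < j'" | "j' < j" by linarith
  then show False
  proof cases
    case 1
    have "j \<le> j' - 1" "j' - 1 \<le> r" using 1 assms(2-7) by auto
    then have "k j \<le> k (j' - 1)" by (rule k_mono[OF assms(1)])
    then show False using assms(2-7) by linarith
  next
    case 2
    have "j' \<le> j - 1" "j - 1 \<le> r" using 2 assms(2-7) by auto
    then have "k j' \<le> k (j - 1)" by (rule k_mono[OF assms(1)])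
    then show False using assms(2-7) by linarith
  qed
qed

lemma block_incr:
  assumes "w \<in> W_Theta n k r" "j \<le> r" "k j < i" "i' \<le> block_end n k r j"
  shows "i < i' \<Longrightarrow> w i < w i'"
  using assms(4)
proof (induction i' rule: nat_less_induct)
  case (1 i')
  then obtain p where p: "i' = Suc p" by (cases i') auto
  have step: "w p < w (Suc p)" using assms(1,2,3) 1(2,3) p unfolding W_Theta_def by auto
  show ?case
  proof (cases "i = p")
    case True then show ?thesis using step p by simp
  next
    case False
    then have "w i < w p" using 1 p by auto
    then show ?thesis using step p by simp
  qed
qed

lemma code_mono:
  assumes "w \<in> W_Theta n k r" "j \<le> r" "k j < i" "i < i'" "i' \<le> block_end n k r j"
  shows "code_entry n w i \<le> code_entry n w i'"
proof -
  have A: "i' < q \<and> w q < w i'" if q: "i < q" "q \<le> n" "w q < w i" for q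
  proof
    show "i' < q"
    proof (rule ccontr)
      assume "\<not> i' < q"
      then have "w i < w q" using block_incr[OF assms(1,2,3), of q] q assms(5) by auto
      then show False using q by simp
    qed
    show "w q < w i'" using q block_incr[OF assms(1,2,3) assms(5) assms(4)] by simp
  qed
  have "{q. i < q \<and> q \<le> n \<and> w q < w i} \<subseteq> {q. i' < q \<and> q \<le> n \<and> w q < w i'}"
    using A by blast
  then show ?thesis unfolding code_entry_def by (intro card_mono) auto
qed

lemma code_bound:
  assumes "w \<in> W_Theta n k r" "j \<le> r" "k j < i" "i \<le> block_end n k r j"
  shows "code_entry n w i \<le> n - block_end n k r j"
proof -
  have A: "block_end n k r j < q" if q: "i < q" "q \<le> n" "w q < w i" for q
  proof (rule ccontr)
    assume "\<not> block_end n k r j < q"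
    then have "w i < w q" using block_incr[OF assms(1,2,3), of q] q by auto
    then show False using q by simp
  qed
  have "{q. i < q \<and> q \<le> n \<and> w q < w i} \<subseteq> {block_end n k r j<..n}"
    using A by auto
  then have "code_entry n w i \<le> card {block_end n k r j<..n}" unfolding code_entry_def
    by (intro card_mono) auto
  then show ?thesis by simp
qed

lemma asc_of_code:
  assumes "w permutes {1..n}" "code_entry n w i \<le> code_entry n w (Suc i)" "Suc i \<le> n"
  shows "w i < w (Suc i)"
proof (rule ccontr)
  assume "\<not> w i < w (Suc i)"
  moreover have "w i \<noteq> w (Suc i)" using inj_eq[OF permutes_inj[OF assms(1)], of i "Suc i"] by simp
  ultimately have lt: "w (Suc i) < w i" by simp
  have "{q. Suc i < q \<and> q \<le> n \<and> w q < w (Suc i)} \<subset> {q. i < q \<and> q \<le> n \<and> w q < w i}"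
    using lt assms(3) by auto
  then have "code_entry n w (Suc i) < code_entry n w i" unfolding code_entry_def
    by (intro psubset_card_mono) auto
  then show False using assms(2) by simp
qed


lemma lambda_map_nth: "j < r \<Longrightarrow> lambda_map n k r w ! j = lambda_part n k w (Suc j)"
  unfolding lambda_map_def by (simp del: upt_Suc)

lemma part1:
  assumes kinc: "\<forall>j<r. k j < k (Suc j)" and kr: "k r < n"
    and w: "w \<in> W_Theta n k r" and j: "j \<in> {1..r}"
  shows "lambda_part n k w j \<in> rect_partitions (k j - k (j - 1)) (n - k j)"
proof -
  have j1: "j - 1 \<le> r" "j - 1 < r" and be: "block_end n k r (j - 1) = k j"
    using j by (auto simp: block_end_def)
  have "k (j - 1) < k (Suc (j - 1))" using kinc j1(2) by blast
  then have lt: "k (j - 1) < k j" using j by simp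
  have srt: "sorted_wrt (\<ge>) (lambda_part n k w j)"
    unfolding sorted_wrt_iff_nth_less lambda_part_def
  proof (intro allI impI)
    fix a b assume ab: "a < b" "b < length (map (\<lambda>t. code_entry n w (k j - t)) [0..<k j - k (j - 1)])"
    then have b: "b < k j - k (j - 1)" by simp
    have "code_entry n w (k j - b) \<le> code_entry n w (k j - a)"
      by (rule code_mono[OF w j1(1)]) (use ab b be in auto)
    then show "map (\<lambda>t. code_entry n w (k j - t)) [0..<k j - k (j - 1)] ! b
          \<le> map (\<lambda>t. code_entry n w (k j - t)) [0..<k j - k (j - 1)] ! a"
      using ab b by simp
  qed
  have bd: "\<forall>x\<in>set (lambda_part n k w j). x \<le> n - k j"
  proof
    fix x assume "x \<in> set (lambda_part n k w j)"
    then obtain t where t: "t < k j - k (j - 1)" "x = code_entry n w (k j - t)"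
      unfolding lambda_part_def by auto
    have "code_entry n w (k j - t) \<le> n - block_end n k r (j - 1)"
      by (rule code_bound[OF w j1(1)]) (use t be in auto)
    then show "x \<le> n - k j" using t be by simp
  qed
  have len: "length (lambda_part n k w j) = k j - k (j - 1)" by (simp add: lambda_part_def)
  show ?thesis unfolding rect_partitions_def fits_rect_def
    using len srt bd by blast
qed

lemma last_zero:
  assumes kr: "k r < n" and w: "w \<in> W_Theta n k r" and i: "k r < i" "i \<le> n"
  shows "code_entry n w i = 0"
  using code_bound[OF w order_refl i(1)] i by (simp add: block_end_def)

lemma codes_eq:
  assumes kinc: "\<forall>j<r. k j < k (Suc j)" and k0: "k 0 = 0" and kr: "k r < n"
    and w: "w \<in> W_Theta n k r" and v: "v \<in> W_Theta n k r"
    and eq: "lambda_map n k r w = lambda_map n k r v"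
    and i: "0 < i" "i \<le> n"
  shows "code_entry n w i = code_entry n v i"
proof (cases "i \<le> k r")
  case True
  then obtain j where j: "j \<in> {1..r}" "k (j - 1) < i" "i \<le> k j" using cover[OF kinc k0 i(1)] by blast
  have "lambda_map n k r w ! (j - 1) = lambda_part n k w j"
    using j lambda_map_nth[of "j - 1" r n k w] by auto
  moreover have "lambda_map n k r v ! (j - 1) = lambda_part n k v j"
    using j lambda_map_nth[of "j - 1" r n k v] by auto
  ultimately have pe: "lambda_part n k w j = lambda_part n k v j" using eq by simp
  define t where "t = k j - i"
  have t: "t < k j - k (j - 1)" "k j - t = i" using j unfolding t_def by auto
  have "lambda_part n k w j ! t = code_entry n w i" using t unfolding lambda_part_def by simp
  moreover have "lambda_part n k v j ! t = code_entry n v i" using t unfolding lambda_part_def by simp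
  ultimately show ?thesis using pe by simp
next
  case False
  then show ?thesis using last_zero[OF kr w] last_zero[OF kr v] i by simp
qed

lemma inj_part:
  assumes kinc: "\<forall>j<r. k j < k (Suc j)" and k0: "k 0 = 0" and kr: "k r < n"
  shows "inj_on (lambda_map n k r) (W_Theta n k r)"
proof (rule inj_onI)
  fix w v assume w: "w \<in> W_Theta n k r" and v: "v \<in> W_Theta n k r"
    and eq: "lambda_map n k r w = lambda_map n k r v"
  have pw: "w permutes {1..n}" and pv: "v permutes {1..n}" using w v by (auto simp: W_Theta_def)
  have iv: "{0<..n} = {1..n}" by auto
  have bw: "bij_betw w {0<..n} {1..n}" and bv: "bij_betw v {0<..n} {1..n}"
    using permutes_imp_bij[OF pw] permutes_imp_bij[OF pv] iv by auto
  have "\<forall>i. 0 < i \<and> i \<le> n \<longrightarrow> w i = v i"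
    apply (rule lehmer_unique[OF refl bw bv])
    using codes_eq[OF kinc k0 kr w v eq] by (auto simp: code_entry_def)
  then show "w = v"
  proof -
    assume A: "\<forall>i. 0 < i \<and> i \<le> n \<longrightarrow> w i = v i"
    show "w = v"
    proof
      fix x show "w x = v x"
      proof (cases "x \<in> {1..n}")
        case True then show ?thesis using A by auto
      next
        case False then show ?thesis using permutes_not_in[OF pw] permutes_not_in[OF pv] by simp
      qed
    qed
  qed
qed


lemma surj_part:
  assumes kinc: "\<forall>j<r. k j < k (Suc j)" and k0: "k 0 = 0" and kr: "k r < n"
    and Ls: "Ls \<in> partition_product n k r"
  shows "\<exists>w\<in>W_Theta n k r. lambda_map n k r w = Ls"
proof -
  have lenLs: "length Ls = r" using Ls by (simp add: partition_product_def)
  have LsP: "fits_rect (k (Suc j) - k j) (n - k (Suc j)) (Ls ! j)" if "j < r" for j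
    using Ls that by (simp add: partition_product_def rect_partitions_def)
  define bj where "bj i = (SOME j. j \<in> {1..r} \<and> k (j - 1) < i \<and> i \<le> k j)" for i
  have bjI: "bj i = j" if "j \<in> {1..r}" "k (j - 1) < i" "i \<le> k j" for i j
    unfolding bj_def
  proof (rule someI2[of _ j])
    show "j \<in> {1..r} \<and> k (j - 1) < i \<and> i \<le> k j" using that by simp
  next
    fix x assume "x \<in> {1..r} \<and> k (x - 1) < i \<and> i \<le> k x"
    then show "x = j" using cover_unique[OF kinc, of x i j] that by auto
  qed
  define \<alpha> where "\<alpha> i = (if 0 < i \<and> i \<le> k r then Ls ! (bj i - 1) ! (k (bj i) - i) else 0)" for i
  have kle: "k (Suc j) \<le> k r" if "j < r" for j using k_mono[OF kinc, of "Suc j" r] that by simp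
  have \<alpha>val: "\<alpha> (k (Suc j) - t) = Ls ! j ! t" if jt: "j < r" "t < k (Suc j) - k j" for j t
  proof -
    define p where "p = k (Suc j) - t"
    have p: "k (Suc j - 1) < p" "p \<le> k (Suc j)" "0 < p" "p \<le> k r" "Suc j \<in> {1..r}"
      using jt kle[OF jt(1)] unfolding p_def by auto
    have "bj p = Suc j" using bjI[OF p(5) p(1) p(2)] .
    then have "\<alpha> p = Ls ! j ! (k (Suc j) - p)" using p unfolding \<alpha>_def by simp
    also have "k (Suc j) - p = t" using jt unfolding p_def by auto
    finally show ?thesis unfolding p_def .
  qed
  have \<alpha>bd: "\<forall>i. 0 < i \<and> i \<le> n \<longrightarrow> \<alpha> i \<le> n - i"
  proof (intro allI impI)
    fix i assume i: "0 < i \<and> i \<le> n"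
    show "\<alpha> i \<le> n - i"
    proof (cases "i \<le> k r")
      case True
      then obtain j where j: "j \<in> {1..r}" "k (j - 1) < i" "i \<le> k j"
        using cover[OF kinc k0] i by blast
      define j' where "j' = j - 1"
      have j': "j = Suc j'" "j' < r" using j unfolding j'_def by auto
      define t where "t = k j - i"
      have t: "t < k (Suc j') - k j'" "k (Suc j') - t = i" using j j' unfolding t_def by auto
      have "\<alpha> i = Ls ! j' ! t" using \<alpha>val[OF j'(2) t(1)] t(2) by simp
      moreover have "Ls ! j' ! t \<in> set (Ls ! j')" using LsP[OF j'(2)] t(1)
        by (simp add: fits_rect_def)
      ultimately have "\<alpha> i \<le> n - k (Suc j')" using LsP[OF j'(2)] by (auto simp: fits_rect_def)
      then show ?thesis using t(2) by linarith
    next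
      case False then show ?thesis unfolding \<alpha>_def by simp
    qed
  qed
  obtain w0 where bw0: "bij_betw w0 {0<..n} {1..n}"
    and cw0: "\<forall>i. 0 < i \<and> i \<le> n \<longrightarrow> card {q. i < q \<and> q \<le> n \<and> w0 q < w0 i} = \<alpha> i"
    using lehmer_exists[where V="{1..n}" and m=0 and \<alpha>=\<alpha> and n=n, OF refl] \<alpha>bd by auto
  define w where "w x = (if x \<in> {1..n} then w0 x else x)" for x
  have iv: "{0<..n} = {1..n}" by auto
  have "bij_betw w {1..n} {1..n} = bij_betw w0 {1..n} {1..n}"
    by (rule bij_betw_cong) (simp add: w_def)
  then have bw: "bij_betw w {1..n} {1..n}" using bw0 iv by simp
  have pw: "w permutes {1..n}" by (rule bij_imp_permutes[OF bw]) (auto simp: w_def)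
  have cw: "code_entry n w i = \<alpha> i" if "0 < i" "i \<le> n" for i
  proof -
    have "{q. i < q \<and> q \<le> n \<and> w q < w i} = {q. i < q \<and> q \<le> n \<and> w0 q < w0 i}"
      using that by (auto simp: w_def)
    then show ?thesis using cw0 that unfolding code_entry_def by simp
  qed
  have wW: "w \<in> W_Theta n k r"
    unfolding W_Theta_def
  proof (intro CollectI conjI pw allI impI)
    fix j i assume j: "j \<le> r" and i: "k j < i \<and> i < block_end n k r j"
    have ben: "block_end n k r j \<le> n"
    proof (cases "j < r")
      case True then show ?thesis using kle[OF True] kr by (simp add: block_end_def)
    qed (simp add: block_end_def)
    have "\<alpha> i \<le> \<alpha> (Suc i)"
    proof (cases "j < r")
      case True
      define t where "t = k (Suc j) - i"
      have be: "block_end n k r j = k (Suc j)" using True by (simp add: block_end_def)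
      have i2: "k j < i" "i < k (Suc j)" using i be by auto
      have t: "t < k (Suc j) - k j" "k (Suc j) - t = i" "0 < t" "k (Suc j) - (t - 1) = Suc i"
        using i2 unfolding t_def by linarith+
      have sw: "sorted_wrt (\<ge>) (Ls ! j)" and lj: "length (Ls ! j) = k (Suc j) - k j"
        using LsP[OF True] unfolding fits_rect_def by auto
      have "t - 1 < t" "t < length (Ls ! j)" using t(1,3) lj by auto
      have "\<alpha> i = Ls ! j ! t" using \<alpha>val[OF True t(1)] t(2) by simp
      moreover have "\<alpha> (Suc i) = Ls ! j ! (t - 1)" using \<alpha>val[OF True, of "t - 1"] t by simp
      moreover have "Ls ! j ! t \<le> Ls ! j ! (t - 1)"
        using sorted_wrt_nth_less[OF sw \<open>t - 1 < t\<close> \<open>t < length (Ls ! j)\<close>] by simp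
      ultimately show ?thesis by simp
    next
      case False
      then have "j = r" using j by simp
      then have "k r < i" using i by simp
      then show ?thesis unfolding \<alpha>_def by simp
    qed
    then show "w i < w (Suc i)"
      by (intro asc_of_code[OF pw]) (use i ben cw[of i] cw[of "Suc i"] in auto)
  qed
  have "lambda_map n k r w = Ls"
  proof (rule nth_equalityI)
    show "length (lambda_map n k r w) = length Ls" using lenLs by (simp add: lambda_map_def del: upt_Suc)
  next
    fix j assume "j < length (lambda_map n k r w)"
    then have j: "j < r" by (simp add: lambda_map_def del: upt_Suc)
    have "lambda_map n k r w ! j = lambda_part n k w (Suc j)"
      using j by (rule lambda_map_nth)
    also have "lambda_part n k w (Suc j) = Ls ! j"
    proof (rule nth_equalityI)
      show "length (lambda_part n k w (Suc j)) = length (Ls ! j)"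
        using LsP[OF j] by (simp add: lambda_part_def fits_rect_def)
    next
      fix t assume "t < length (lambda_part n k w (Suc j))"
      then have t: "t < k (Suc j) - k j" by (simp add: lambda_part_def)
      have "lambda_part n k w (Suc j) ! t = code_entry n w (k (Suc j) - t)"
        using t by (simp add: lambda_part_def)
      also have "\<dots> = \<alpha> (k (Suc j) - t)"
        using t kle[OF j] kr by (intro cw) auto
      also have "\<dots> = Ls ! j ! t" using \<alpha>val[OF j t] .
      finally show "lambda_part n k w (Suc j) ! t = Ls ! j ! t" .
    qed
    finally show "lambda_map n k r w ! j = Ls ! j" .
  qed
  then show ?thesis using wW by blast
qed

theorem proposition2p3:
  fixes n r :: nat and k :: "nat \<Rightarrow> nat"
  assumes "n \<ge> 2" and "r \<ge> 1"
    and "k 0 = 0"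
    and "\<forall>j<r. k j < k (Suc j)"
    and "k r < n"
  shows "(\<forall>w\<in>W_Theta n k r. \<forall>j\<in>{1..r}.
            lambda_part n k w j \<in> rect_partitions (k j - k (j - 1)) (n - k j))
         \<and> bij_betw (lambda_map n k r) (W_Theta n k r) (partition_product n k r)"
proof
  show P1: "\<forall>w\<in>W_Theta n k r. \<forall>j\<in>{1..r}.
            lambda_part n k w j \<in> rect_partitions (k j - k (j - 1)) (n - k j)"
    using part1[OF assms(4,5)] by blast
  have "lambda_map n k r ` W_Theta n k r \<subseteq> partition_product n k r"
  proof
    fix x assume "x \<in> lambda_map n k r ` W_Theta n k r"
    then obtain w where w: "w \<in> W_Theta n k r" "x = lambda_map n k r w" by blast
    have "lambda_map n k r w ! j \<in> rect_partitions (k (Suc j) - k j) (n - k (Suc j))" if "j < r" for j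
    proof -
      have "lambda_map n k r w ! j = lambda_part n k w (Suc j)"
        using that by (rule lambda_map_nth)
      then show ?thesis using P1 w(1) that by force
    qed
    then show "x \<in> partition_product n k r" using w
      by (simp add: partition_product_def lambda_map_def del: upt_Suc)
  qed
  moreover have "partition_product n k r \<subseteq> lambda_map n k r ` W_Theta n k r"
    using surj_part[OF assms(4,3,5)] by blast
  ultimately show "bij_betw (lambda_map n k r) (W_Theta n k r) (partition_product n k r)"
    unfolding bij_betw_def using inj_part[OF assms(4,3,5)] by blast
qed

end
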